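(* Let $\odot$ be a pseudo-multiplication on $[0,\infty]$ with left identity $1_{\odot}$, and let $F_{\odot}$ be the set of $\odot$-finite elements. Then $F_{\odot}$ is either $\{0\}$, or $[0,\infty]$, or of the form $[0,\phi)$ for some $\phi\in(1_{\odot},\infty]$ such that $O(\phi)=\phi$.
   Context: A pseudo-multiplication is a binary operation $\odot:[0,\infty]\times[0,\infty]\to[0,\infty]$ such that: $\odot$ is associative; $\odot$ is continuous on $(0,\infty)\times[0,\infty]$; for every $t$, the map $s\mapsto s\odot t$ is continuous on $(0,\infty]$; $\odot$ is nondecreasing in each argument; there is a left identity element $1_{\odot}$, i.e. $1_{\odot}\odot t=t$ for all $t$; there are no zero divisors, i.e. $s\odot t=0$ implies $s=0$ or $t=0$; and $0$ is an annihilator, i.e. $0\odot t=t\odot 0=0$ for all $t$. For $t\in[0,\infty]$ put $O(t)=\inf_{s>0} s\odot t$. An element $t$ is called $\odot$-finite if $O(t)=0$, and $\odot$-infinite otherwise. *)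

theory Defs
  imports "HOL-Analysis.Analysis"
begin

definition pseudo_mult :: "(ennreal \<Rightarrow> ennreal \<Rightarrow> ennreal) \<Rightarrow> ennreal \<Rightarrow> bool" where
  "pseudo_mult f e \<longleftrightarrow>
     (\<forall>a b c. f (f a b) c = f a (f b c)) \<and>
     continuous_on ({0<..<\<infinity>} \<times> UNIV) (\<lambda>(s, t). f s t) \<and>
     (\<forall>t. continuous_on {0<..} (\<lambda>s. f s t)) \<and>
     (\<forall>t. mono (\<lambda>s. f s t)) \<and> (\<forall>s. mono (\<lambda>t. f s t)) \<and>
     (\<forall>t. f e t = t) \<and>
     (\<forall>s t. f s t = 0 \<longrightarrow> s = 0 \<or> t = 0) \<and>
     (\<forall>t. f 0 t = 0 \<and> f t 0 = 0)"

definition pm_O :: "(ennreal \<Rightarrow> ennreal \<Rightarrow> ennreal) \<Rightarrow> ennreal \<Rightarrow> ennreal" where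
  "pm_O f t = (INF s\<in>{0<..}. f s t)"

definition pm_finite_set :: "(ennreal \<Rightarrow> ennreal \<Rightarrow> ennreal) \<Rightarrow> ennreal set" where
  "pm_finite_set f = {t. pm_O f t = 0}"

end

theory Submission
  imports Defs
begin

lemma pm_basic:
  assumes "pseudo_mult f e"
  shows "\<And>a b c. f (f a b) c = f a (f b c)"
    and "continuous_on ({0<..<\<infinity>} \<times> UNIV) (\<lambda>(s, t). f s t)"
    and "\<And>t. continuous_on {0<..} (\<lambda>s. f s t)"
    and "\<And>t. mono (\<lambda>s. f s t)" and "\<And>s. mono (\<lambda>t. f s t)"
    and "\<And>t. f e t = t"
    and "\<And>s t. f s t = 0 \<Longrightarrow> s = 0 \<or> t = 0"
    and "\<And>t. f 0 t = 0" and "\<And>t. f t 0 = 0"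
  using assms unfolding pseudo_mult_def by blast+

lemma pm_cont2:
  assumes "pseudo_mult f e" "0 < s" "s < \<infinity>"
  shows "continuous_on UNIV (f s)"
proof -
  have c: "continuous_on ({0<..<\<infinity>} \<times> UNIV) (\<lambda>(s, t). f s t)"
    using pm_basic(2)[OF assms(1)] .
  have "continuous_on UNIV (\<lambda>t. (\<lambda>(s, t). f s t) (s, t))"
    by (rule continuous_on_compose2[OF c]) (use assms in \<open>auto intro!: continuous_intros\<close>)
  then show ?thesis by (simp add: fun_eq_iff)
qed

lemma pm_cont2_Inf:
  assumes "pseudo_mult f e" "0 < s" "s < \<infinity>" "S \<noteq> {}"
  shows "f s (Inf S) = (INF x\<in>S. f s x)"
proof (rule continuous_at_Inf_mono)
  show "mono (f s)" using pm_basic(5)[OF assms(1), of s] by (simp add: mono_def)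
  have "continuous_on UNIV (f s)" using pm_cont2[OF assms(1-3)] .
  then have "continuous (at (Inf S)) (f s)"
    by (simp add: continuous_on_eq_continuous_at)
  then show "continuous (at_right (Inf S)) (f s)"
    using continuous_at_imp_continuous_at_within by blast
  show "S \<noteq> {}" by fact
  show "bdd_below S" by simp
qed

lemma pm_cont1_Inf:
  assumes "pseudo_mult f e" "0 < Inf S" "S \<noteq> {}"
  shows "f (Inf S) t = (INF x\<in>S. f x t)"
proof (rule continuous_at_Inf_mono[where f="\<lambda>x. f x t"])
  show "mono (\<lambda>x. f x t)" using pm_basic(4)[OF assms(1), of t] .
  have "continuous_on {0<..} (\<lambda>s. f s t)" using pm_basic(3)[OF assms(1)] .
  then have "continuous (at (Inf S) within {0<..}) (\<lambda>s. f s t)"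
    using assms(2) by (simp add: continuous_on_eq_continuous_within)
  then show "continuous (at_right (Inf S)) (\<lambda>s. f s t)"
    by (rule continuous_within_subset) (use assms(2) in auto)
  show "S \<noteq> {}" by fact
  show "bdd_below S" by simp
qed

lemma pm_e_pos:
  assumes "pseudo_mult f e" shows "0 < e"
proof (rule ccontr)
  assume "\<not> 0 < e"
  then have "e = 0" by (simp add: not_less)
  then have "f 0 1 = 1" using pm_basic(6)[OF assms] by simp
  moreover have "f 0 1 = 0" using pm_basic(8)[OF assms] by simp
  ultimately show False by simp
qed

lemma pm_O_le:
  assumes "pseudo_mult f e" shows "pm_O f t \<le> t"
proof -
  have "pm_O f t \<le> f e t" unfolding pm_O_def
    by (rule INF_lower) (use pm_e_pos[OF assms] in auto)
  then show ?thesis using pm_basic(6)[OF assms] by simp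
qed

lemma pm_O_mono:
  assumes "pseudo_mult f e" "u \<le> t" shows "pm_O f u \<le> pm_O f t"
  unfolding pm_O_def
  by (rule INF_mono) (use pm_basic(5)[OF assms(1)] assms(2) in \<open>auto simp: mono_def\<close>)

lemma Inf_pos_ennreal: "Inf {0<..} = (0::ennreal)"
proof (rule antisym)
  show "Inf {0<..} \<le> (0::ennreal)"
  proof (rule dense_ge)
    fix y :: ennreal assume "0 < y"
    show "Inf {0<..} \<le> y" by (rule Inf_lower) (use \<open>0 < y\<close> in auto)
  qed
qed simp

lemma pm_fix:
  assumes "pseudo_mult f e" "0 < s" "s < \<infinity>"
  shows "f s (pm_O f t) = pm_O f t"
proof -
  have "f s (pm_O f t) = (INF x\<in>(\<lambda>r. f r t) ` {0<..}. f s x)"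
    unfolding pm_O_def proof (rule pm_cont2_Inf[OF assms])
    have "(1::ennreal) \<in> {0<..}" by simp
    then show "(\<lambda>r. f r t) ` {0<..} \<noteq> {}" by blast
  qed
  also have "\<dots> = (INF r\<in>{0<..}. f (f s r) t)"
    by (simp add: image_image pm_basic(1)[OF assms(1)])
  also have "\<dots> = pm_O f t"
  proof (rule antisym)
    have z: "(INF r\<in>{0<..}. f s r) = 0"
    proof -
      have ne: "{0<..} \<noteq> ({}::ennreal set)"
        using zero_less_one[where 'a=ennreal] by blast
      show ?thesis
        using pm_cont2_Inf[OF assms ne] Inf_pos_ennreal pm_basic(9)[OF assms(1)]
        by simp
    qed
    show "(INF r\<in>{0<..}. f (f s r) t) \<le> pm_O f t"
      unfolding pm_O_def
    proof (rule INF_mono)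
      fix r' :: ennreal assume "r' \<in> {0<..}"
      then have "(INF r\<in>{0<..}. f s r) < r'" using z by simp
      then obtain r where r: "r \<in> {0<..}" "f s r < r'" by (auto simp: INF_less_iff)
      then have "f (f s r) t \<le> f r' t"
        using pm_basic(4)[OF assms(1), of t] by (auto simp: mono_def)
      then show "\<exists>m\<in>{0<..}. f (f s m) t \<le> f r' t" using r by blast
    qed
    show "pm_O f t \<le> (INF r\<in>{0<..}. f (f s r) t)"
      unfolding pm_O_def
    proof (rule INF_mono)
      fix r :: ennreal assume r: "r \<in> {0<..}"
      have "f s r \<noteq> 0" using pm_basic(7)[OF assms(1), of s r] assms(2) r by auto
      then have "f s r \<in> {0<..}" by (simp add: zero_less_iff_neq_zero)
      then show "\<exists>m\<in>{0<..}. f m t \<le> f (f s r) t" by blast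
    qed
  qed
  finally show ?thesis .
qed

lemma pm_Ofix:
  assumes "pseudo_mult f e" "\<forall>s\<in>{0<..<\<infinity>}. f s c = c"
  shows "pm_O f c = c"
proof (rule antisym)
  show "pm_O f c \<le> c" by (rule pm_O_le[OF assms(1)])
  show "c \<le> pm_O f c" unfolding pm_O_def
  proof (rule INF_greatest)
    fix s :: ennreal assume s: "s \<in> {0<..}"
    show "c \<le> f s c"
    proof (cases "s < \<infinity>")
      case True then show ?thesis using assms(2) s by auto
    next
      case False
      then have "1 \<le> s" by (simp add: not_less top_unique)
      then have "f 1 c \<le> f s c" using pm_basic(4)[OF assms(1), of c] by (auto simp: mono_def)
      moreover have "f 1 c = c" using assms(2) by auto
      ultimately show ?thesis by simp
    qed
  qed
qed

lemma pm_e_fin: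
  assumes "pseudo_mult f e" "pm_O f t = 0" "0 < t"
  shows "pm_O f e = 0"
proof (rule ccontr)
  assume "pm_O f e \<noteq> 0"
  then have c: "0 < pm_O f e" by (simp add: zero_less_iff_neq_zero)
  have "f (pm_O f e) t = (INF x\<in>(\<lambda>s. f s e) ` {0<..}. f x t)"
    using c unfolding pm_O_def by (intro pm_cont1_Inf[OF assms(1)]) auto
  also have "\<dots> = (INF s\<in>{0<..}. f s (f e t))"
    by (simp add: image_image pm_basic(1)[OF assms(1)])
  also have "\<dots> = pm_O f t" by (simp add: pm_basic(6)[OF assms(1)] pm_O_def)
  finally have "f (pm_O f e) t = 0" using assms(2) by simp
  then have "pm_O f e = 0 \<or> t = 0" using pm_basic(7)[OF assms(1)] by blast
  then show False using c assms(3) by auto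
qed

theorem lemma2p5:
  fixes f :: "ennreal \<Rightarrow> ennreal \<Rightarrow> ennreal" and e :: ennreal
  assumes "pseudo_mult f e"
  shows "pm_finite_set f = {0} \<or> pm_finite_set f = UNIV \<or>
    (\<exists>\<phi>. e < \<phi> \<and> pm_finite_set f = {..<\<phi>} \<and> pm_O f \<phi> = \<phi>)"
proof -
  define F where "F = pm_finite_set f"
  define P where "P = {c. 0 < c \<and> (\<forall>s\<in>{0<..<\<infinity>}. f s c = c)}"
  have F_iff: "t \<in> F \<longleftrightarrow> pm_O f t = 0" for t by (simp add: F_def pm_finite_set_def)
  have notF: "pm_O f t \<in> P \<and> pm_O f t \<le> t" if "t \<notin> F" for t
    using that pm_fix[OF assms] pm_O_le[OF assms] by (auto simp: F_iff P_def zero_less_iff_neq_zero)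
  have Pnot: "c \<notin> F" if "c \<in> P" for c
    using that pm_Ofix[OF assms] by (auto simp: F_iff P_def)
  have down: "u \<in> F" if "t \<in> F" "u \<le> t" for t u
    using that pm_O_mono[OF assms, of u t] by (simp add: F_iff)
  show ?thesis
  proof (cases "P = {}")
    case True
    then have "F = UNIV" using notF by auto
    then show ?thesis by (simp add: F_def)
  next
    case False
    define d where "d = Inf P"
    have dQ: "\<forall>s\<in>{0<..<\<infinity>}. f s d = d"
    proof
      fix s :: ennreal assume s: "s \<in> {0<..<\<infinity>}"
      have "f s d = (INF c\<in>P. f s c)" unfolding d_def
        using pm_cont2_Inf[OF assms, of s P] s False by auto
      also have "\<dots> = (INF c\<in>P. c)" using s by (intro INF_cong) (auto simp: P_def)
      finally show "f s d = d" by (simp add: d_def)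
    qed
    show ?thesis
    proof (cases "d = 0")
      case True
      have "F = {0}"
      proof (intro set_eqI iffI)
        fix t assume t: "t \<in> F"
        show "t \<in> {0}"
        proof (rule ccontr)
          assume "t \<notin> {0}"
          then have "Inf P < t" using True by (simp add: d_def zero_less_iff_neq_zero)
          then obtain c where "c \<in> P" "c < t" by (auto simp: Inf_less_iff)
          then show False using down[OF t, of c] Pnot[of c] less_imp_le by blast
        qed
      next
        fix t :: ennreal assume "t \<in> {0}"
        then show "t \<in> F" using pm_O_le[OF assms, of 0] by (simp add: F_iff)
      qed
      then show ?thesis by (simp add: F_def)
    next
      case False
      then have dpos: "0 < d" by (simp add: zero_less_iff_neq_zero)
      have dP: "d \<in> P" using dpos dQ by (simp add: P_def)
      have Od: "pm_O f d = d" using pm_Ofix[OF assms dQ] .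
      have Fd: "F = {..<d}"
      proof (intro set_eqI iffI)
        fix t assume t: "t \<in> F"
        show "t \<in> {..<d}"
        proof (rule ccontr)
          assume "t \<notin> {..<d}"
          then have "d \<le> t" by simp
          then show False using down[OF t] Pnot[OF dP] by blast
        qed
      next
        fix t assume t: "t \<in> {..<d}"
        show "t \<in> F"
        proof (rule ccontr)
          assume "t \<notin> F"
          then have "pm_O f t \<in> P" "pm_O f t \<le> t" using notF by auto
          then have "d \<le> pm_O f t" by (simp add: d_def Inf_lower)
          then show False using \<open>pm_O f t \<le> t\<close> t by simp
        qed
      qed
      obtain t :: ennreal where t: "0 < t" "t < d" using dense[OF dpos] by blast
      then have "pm_O f t = 0" using Fd F_iff by auto
      then have "e \<in> F" using pm_e_fin[OF assms _ t(1)] F_iff by simp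
      then have "e < d" using Fd by auto
      then show ?thesis using Fd Od by (auto simp: F_def)
    qed
  qed
qed

end
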